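(* Let $\mathbf{z}\in\mathrm{GF}(2)^{2\times 30}$ be arbitrary and define binary $6\times 30$ matrices $\mathbf{Z_1},\mathbf{Z_2},\mathbf{Z_3}$ by: rows 1–2 of $\mathbf{Z_1}$ equal $\mathbf{z}$; rows 3–4 of $\mathbf{Z_1}$ equal $f(\text{rows }1\text{–}2 \text{ of } \mathbf{Z_1})$; rows 5–6 of $\mathbf{Z_1}$ equal $f(\text{rows }3\text{–}4\text{ of }\mathbf{Z_1})$; $\mathbf{Z_2}=g(\mathbf{Z_1})$; $\mathbf{Z_3}=g(\mathbf{Z_2})$. Let $\mathbf{W_1},\mathbf{W_2},\mathbf{W_3}$ be the $10\times 30$ matrices selecting the coordinates of files $A$, $B$, $C$ respectively (i.e., $\mathbf{W_1}=[I_{10}\ 0\ 0]$, $\mathbf{W_2}=[0\ I_{10}\ 0]$, $\mathbf{W_3}=[0\ 0\ I_{10}]$). For $S,T\subseteq\{1,2,3\}$ let $\mathbf{M}(S,T)$ be the matrix obtained by stacking $\mathbf{W_j}$ for $j\in S$ and $\mathbf{Z_i}$ for $i\in T$. Then for any $S,S',T,T'\subseteq\{1,2,3\}$ with $|S|=|S'|$ and $|T|=|T'|$, we have $\operatorname{rank}\mathbf{M}(S,T)=\operatorname{rank}\mathbf{M}(S',T')$ over $\mathrm{GF}(2)$; equivalently, the joint entropies $H(\{W_j\}_{j\in S},\{Z_i\}_{i\in T})$ and $H(\{W_j\}_{j\in S'},\{Z_i\}_{i\in T'})$ are equal.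
   Context: Three files $A=W_1$, $B=W_2$, $C=W_3$ are each split into 10 subfiles $A_1,\dots,A_{10}$, $B_1,\dots,B_{10}$, $C_1,\dots,C_{10}$, all i.i.d. uniform bit strings of equal length; the information vector is $\mathbf{W}=[A_1,\dots,A_{10},B_1,\dots,B_{10},C_1,\dots,C_{10}]$, so coordinates $1$–$10$, $11$–$20$, $21$–$30$ correspond to $A$, $B$, $C$. A binary matrix $\mathbf{G}$ with 30 columns represents the linear code $\mathbf{G}\mathbf{W}^{T}$, and cache $Z_i$ is $\mathbf{Z_i}\mathbf{W}^T$, file $W_j$ is $\mathbf{W_j}\mathbf{W}^T$; the entropy of a collection of such variables equals the rank of the stacked generator matrices times the subfile size. Column operations on matrices with 30 columns (applied to each row): $f$ moves the coefficient of $A_i$ to the position of $B_i$, that of $B_i$ to $C_i$, that of $C_i$ to $A_i$ (for all $i=1,\dots,10$), i.e., it relabels files $A\mapsto B\mapsto C\mapsto A$; $g$ moves, within each file, the coefficient of subfile $i$ to subfile $i+3$ reduced into $\{1,\dots,9\}$ modulo 9 (so $1\mapsto4,\dots,6\mapsto 9, 7\mapsto1, 8\mapsto 2, 9\mapsto 3$) for $1\le i\le 9$, and fixes subfile $10$. For example, $f\circ g$ sends the row representing $A_2\oplus B_3\oplus C_9\oplus C_{10}$ to the row representing $B_5\oplus C_6\oplus A_3\oplus A_{10}$. *)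

theory Defs
  imports "HOL-Library.Z2" "Jordan_Normal_Form.DL_Rank"
begin

text \<open>GF(2) is the type bit (HOL-Library.Z2). Coordinates are 0-based:
  column j (0 \<le> j < 30) is subfile (j mod 10) + 1 of file (j div 10) + 1,
  files 1,2,3 being A,B,C.\<close>

text \<open>Operation f: the coefficient at position j moves to position (j+10) mod 30
  (A_i to B_i, B_i to C_i, C_i to A_i). So new entry j = old entry (j+20) mod 30.\<close>
definition f_op :: "bit mat \<Rightarrow> bit mat" where
  "f_op A = mat (dim_row A) 30 (\<lambda>(r, j). A $$ (r, (j + 20) mod 30))"

text \<open>Operation g: within each file, subfile i (1-based, 1..9) moves to
  subfile ((i+2) mod 9)+1, i.e. 0-based s moves to (s+3) mod 9; subfile 10
  (0-based 9) fixed. New entry at 0-based s equals old entry at (s+6) mod 9.\<close>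
definition g_src :: "nat \<Rightarrow> nat" where
  "g_src j = (if j mod 10 = 9 then j else 10 * (j div 10) + ((j mod 10) + 6) mod 9)"

definition g_op :: "bit mat \<Rightarrow> bit mat" where
  "g_op A = mat (dim_row A) 30 (\<lambda>(r, j). A $$ (r, g_src j))"

definition Z1 :: "bit mat \<Rightarrow> bit mat" where
  "Z1 z = z @\<^sub>r f_op z @\<^sub>r f_op (f_op z)"

definition Zmat :: "bit mat \<Rightarrow> nat \<Rightarrow> bit mat" where
  "Zmat z i = (if i = 1 then Z1 z else if i = 2 then g_op (Z1 z) else g_op (g_op (Z1 z)))"

definition Wmat :: "nat \<Rightarrow> bit mat" where
  "Wmat j = mat 10 30 (\<lambda>(r, c). if c = 10 * (j - 1) + r then 1 else 0)"

definition stack :: "bit mat list \<Rightarrow> bit mat" where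
  "stack Ms = foldr (\<lambda>A B. A @\<^sub>r B) Ms (0\<^sub>m 0 30)"

definition Mmat :: "bit mat \<Rightarrow> nat set \<Rightarrow> nat set \<Rightarrow> bit mat" where
  "Mmat z S T = stack (map Wmat (sorted_list_of_set S) @ map (Zmat z) (sorted_list_of_set T))"

definition gf2_rank :: "bit mat \<Rightarrow> nat" where
  "gf2_rank A = vec_space.rank (dim_row A) A"

end

theory Submission
  imports Defs "HOL-Combinatorics.List_Permutation"
begin

lemma (in vec_space) rank_rowperm_ge:
  assumes A: "A \<in> carrier_mat n nc"
    and pi: "bij_betw \<pi> {..<n} {..<n}"
  shows "rank A \<le> rank (mat n nc (\<lambda>(r,c). A $$ (\<pi> r, c)))"
proof -
  define B where "B = mat n nc (\<lambda>(r,c). A $$ (\<pi> r, c))"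
  define \<phi> where "\<phi> v = vec n (\<lambda>r. v $ \<pi> r)" for v :: "'a vec"
  have Bc: "B \<in> carrier_mat n nc" by (simp add: B_def)
  have li0: "lin_indpt {}" unfolding lin_dep_def by auto
  obtain S where Smax: "maximal S (\<lambda>T. T \<subseteq> set (cols A) \<and> lin_indpt T)" and finS: "finite S"
    using maximal_exists_superset[of "set (cols A)" "(\<lambda>T. T \<subseteq> set (cols A) \<and> lin_indpt T)" "{}"] li0
    by auto
  have rA: "rank A = card S" by (rule rank_card_indpt[OF A Smax])
  have Ssub: "S \<subseteq> set (cols A)" and Sli: "lin_indpt S" using Smax unfolding maximal_def by auto
  have Scar: "S \<subseteq> carrier_vec n" using Ssub A by (auto simp: cols_def)
  have pin: "\<And>r. r < n \<Longrightarrow> \<pi> r < n" using pi unfolding bij_betw_def by auto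
  have colB: "\<And>c. c < nc \<Longrightarrow> col B c = \<phi> (col A c)"
    using A pin by (auto simp: B_def \<phi>_def intro!: eq_vecI)
  have sub: "\<phi> ` S \<subseteq> set (cols B)"
  proof
    fix y assume "y \<in> \<phi> ` S"
    then obtain x where x: "x \<in> S" "y = \<phi> x" by auto
    then obtain c where c: "c < nc" "x = col A c" using Ssub A by (auto simp: cols_def)
    have "y = col B c" using colB[OF c(1)] c x by simp
    then show "y \<in> set (cols B)" using c Bc by (auto simp: cols_def)
  qed
  have surj: "\<And>i. i < n \<Longrightarrow> \<exists>j<n. \<pi> j = i" using pi unfolding bij_betw_def by (metis imageE lessThan_iff)
  have inj: "inj_on \<phi> (carrier_vec n)"
  proof
    fix u v assume u: "u \<in> carrier_vec n" and v: "v \<in> carrier_vec n" and e: "\<phi> u = \<phi> v"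
    show "u = v"
    proof (rule eq_vecI)
      fix i assume "i < dim_vec v"
      then obtain j where j: "j < n" "\<pi> j = i" using surj v by auto
      have "\<phi> u $ j = \<phi> v $ j" using e by simp
      then show "u $ i = v $ i" using j by (simp add: \<phi>_def)
    qed (use u v in auto)
  qed
  have injS: "inj_on \<phi> S" using inj Scar by (rule inj_on_subset)
  have li: "lin_indpt (\<phi> ` S)"
  proof
    assume "lin_dep (\<phi> ` S)"
    then obtain A' a v where fA: "finite A'" and A'S: "A' \<subseteq> \<phi> ` S" and lc: "lincomb a A' = 0\<^sub>v n"
       and vA: "v \<in> A'" and av: "a v \<noteq> 0"
      unfolding lin_dep_def by auto
    define X where "X = {x\<in>S. \<phi> x \<in> A'}"
    have XA: "\<phi> ` X = A'" using A'S by (auto simp: X_def)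
    have injX: "inj_on \<phi> X" using injS by (rule inj_on_subset) (auto simp: X_def)
    have fX: "finite X" using fA XA injX finite_imageD by metis
    have Xcar: "X \<subseteq> carrier_vec n" using Scar by (auto simp: X_def)
    have A'car: "A' \<subseteq> carrier_vec n" using XA by (auto simp: \<phi>_def)
    have "lincomb (a \<circ> \<phi>) X = 0\<^sub>v n"
    proof (rule eq_vecI)
      fix i assume "i < dim_vec (0\<^sub>v n :: 'a vec)"
      then have i: "i < n" by simp
      then obtain j where j: "j < n" "\<pi> j = i" using surj by auto
      have "lincomb (a \<circ> \<phi>) X $ i = (\<Sum>x\<in>X. a (\<phi> x) * x $ i)"
        using lincomb_index[OF i Xcar] by simp
      also have "\<dots> = (\<Sum>x\<in>X. a (\<phi> x) * \<phi> x $ j)" using j by (simp add: \<phi>_def)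
      also have "\<dots> = (\<Sum>y\<in>\<phi> ` X. a y * y $ j)" using sum.reindex[OF injX, of "\<lambda>y. a y * y $ j"] by (simp add: comp_def)
      also have "\<dots> = lincomb a A' $ j" using lincomb_index[OF j(1) A'car] XA by simp
      also have "\<dots> = 0" using lc j by simp
      finally show "lincomb (a \<circ> \<phi>) X $ i = 0\<^sub>v n $ i" using i by simp
    next
      show "dim_vec (lincomb (a \<circ> \<phi>) X) = dim_vec (0\<^sub>v n :: 'a vec)"
        using lincomb_dim[OF fX Xcar] by simp
    qed
    moreover obtain w where "w \<in> X" "\<phi> w = v" using vA XA by auto
    ultimately have "lin_dep S" unfolding lin_dep_def using fX av
      by (intro exI[of _ X] exI[of _ "a \<circ> \<phi>"] exI[of _ w]) (auto simp: X_def)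
    then show False using Sli by simp
  qed
  have "card (\<phi> ` S) = card S" using injS by (rule card_image)
  then have "rank B \<ge> card S" using rank_ge_card_indpt[OF Bc sub li] by simp
  then show ?thesis using rA B_def by simp
qed

lemma rank_mset_le:
  assumes "dim_col A = dim_col B" and "mset (rows A) = mset (rows B)"
  shows "gf2_rank A \<le> gf2_rank B"
proof -
  define n where "n = dim_row A"
  define nc where "nc = dim_col A"
  have nB: "dim_row B = n" using mset_eq_length[OF assms(2)] by (simp add: n_def)
  have "rows B <~~> rows A" using assms(2) by simp
  from permutation_Ex_bij[OF this] obtain f where
    f: "bij_betw f {..<n} {..<n}" "\<forall>i<n. rows B ! i = rows A ! f i"
    using nB n_def by auto
  have fn: "\<And>i. i < n \<Longrightarrow> f i < n" using f(1) unfolding bij_betw_def by auto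
  have B: "B = mat n nc (\<lambda>(r,c). A $$ (f r, c))"
  proof (rule eq_matI)
    fix i j assume i: "i < dim_row (mat n nc (\<lambda>(r,c). A $$ (f r, c)))"
      and j: "j < dim_col (mat n nc (\<lambda>(r,c). A $$ (f r, c)))"
    have "row B i = row A (f i)" using f(2) i fn[of i] nB n_def by simp
    then have "row B i $ j = row A (f i) $ j" by simp
    then show "B $$ (i, j) = mat n nc (\<lambda>(r,c). A $$ (f r, c)) $$ (i, j)"
      using i j nB assms(1) nc_def n_def fn[of i] by simp
  qed (use nB assms(1) nc_def in auto)
  have Ac: "A \<in> carrier_mat n nc" unfolding n_def nc_def by (rule carrier_matI) (rule refl)+
  have "vec_space.rank n A \<le> vec_space.rank n B"
    using vec_space.rank_rowperm_ge[OF Ac f(1)] B by simp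
  then show ?thesis unfolding gf2_rank_def using nB n_def by simp
qed

lemma rank_mset:
  assumes "dim_col A = dim_col B" and "mset (rows A) = mset (rows B)"
  shows "gf2_rank A = gf2_rank B"
  using rank_mset_le[OF assms] rank_mset_le[OF assms[symmetric]] by simp

lemma rank_colperm:
  assumes A: "dim_col A = 30" and p1: "\<And>k. k < 30 \<Longrightarrow> \<exists>j<30. p j = k"
    and p2: "\<And>j. j < 30 \<Longrightarrow> p j < 30"
  shows "gf2_rank (mat (dim_row A) 30 (\<lambda>(r,j). A $$ (r, p j))) = gf2_rank A"
proof -
  let ?B = "mat (dim_row A) 30 (\<lambda>(r,j). A $$ (r, p j))"
  have colB: "\<And>j. j < 30 \<Longrightarrow> col ?B j = col A (p j)"
    using p2 A by (auto intro!: eq_vecI)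
  have "set (cols ?B) = set (cols A)"
  proof
    show "set (cols ?B) \<subseteq> set (cols A)"
    proof
      fix x assume "x \<in> set (cols ?B)"
      then obtain j where j: "j < 30" "x = col ?B j" by (auto simp: cols_def)
      then have "x = col A (p j)" using colB by simp
      then show "x \<in> set (cols A)" using p2[OF j(1)] A by (auto simp: cols_def)
    qed
    show "set (cols A) \<subseteq> set (cols ?B)"
    proof
      fix x assume "x \<in> set (cols A)"
      then obtain k where k: "k < 30" "x = col A k" using A by (auto simp: cols_def)
      then obtain j where j: "j < 30" "p j = k" using p1 by blast
      then have "x = col ?B j" using colB[OF j(1)] k by metis
      then show "x \<in> set (cols ?B)" using j by (auto simp: cols_def)
    qed
  qed
  then show ?thesis unfolding gf2_rank_def vec_space.rank_def by simp
qed

lemma rows_append_rows: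
  assumes "dim_col B = dim_col A"
  shows "rows (A @\<^sub>r B) = rows A @ rows B" and "dim_col (A @\<^sub>r B) = dim_col A"
proof -
  show d: "dim_col (A @\<^sub>r B) = dim_col A" by (simp add: append_rows_def)
  show "rows (A @\<^sub>r B) = rows A @ rows B"
  proof (rule nth_equalityI)
    show "length (rows (A @\<^sub>r B)) = length (rows A @ rows B)" by (simp add: append_rows_def)
    fix i assume "i < length (rows (A @\<^sub>r B))"
    then have i: "i < dim_row A + dim_row B" by (simp add: append_rows_def)
    show "rows (A @\<^sub>r B) ! i = (rows A @ rows B) ! i"
      using i assms by (auto simp: append_rows_def nth_append intro!: eq_vecI)
  qed
qed

lemma rows_stack:
  assumes "\<forall>M\<in>set Ms. dim_col M = 30"
  shows "dim_col (stack Ms) = 30 \<and> rows (stack Ms) = concat (map rows Ms)"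
  using assms
proof (induction Ms)
  case Nil
  then show ?case by (simp add: stack_def rows_def)
next
  case (Cons M Ms)
  then have IH: "dim_col (stack Ms) = 30" "rows (stack Ms) = concat (map rows Ms)" and dM: "dim_col M = 30" by auto
  have st: "stack (M # Ms) = M @\<^sub>r stack Ms" by (simp add: stack_def)
  show ?case unfolding st using rows_append_rows[of "stack Ms" M] IH dM by simp
qed

lemma mset_concat_sorted:
  assumes "finite X"
  shows "mset (concat (map h (sorted_list_of_set X))) = (\<Sum>x\<in>X. mset (h x))"
proof -
  have "mset (concat (map h (sorted_list_of_set X))) = sum_list (map (\<lambda>x. mset (h x)) (sorted_list_of_set X))"
    by (simp add: mset_concat comp_def)
  also have "\<dots> = (\<Sum>x\<in>X. mset (h x))"
    using sum_list_distinct_conv_sum_set[of "sorted_list_of_set X" "\<lambda>x. mset (h x)"] assms by simp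
  finally show ?thesis .
qed



definition fv :: "bit vec \<Rightarrow> bit vec" where "fv v = vec 30 (\<lambda>j. v $ ((j+20) mod 30))"
definition gv :: "bit vec \<Rightarrow> bit vec" where "gv v = vec 30 (\<lambda>j. v $ g_src j)"
definition sg :: "nat \<Rightarrow> nat" where "sg j = j mod 3 + 1"
definition rho :: "nat \<Rightarrow> nat" where "rho r = (if r = 9 then 9 else (r+3) mod 9)"

lemma ar1': "\<forall>j\<in>set [0..<(30::nat)]. g_src j < 30" unfolding g_src_def by code_simp
lemma ar2': "\<forall>j\<in>set [0..<(30::nat)]. g_src (g_src (g_src j)) = j" unfolding g_src_def by code_simp
lemma ar3': "\<forall>j\<in>set [0..<(30::nat)]. g_src ((j+20) mod 30) = (g_src j + 20) mod 30" unfolding g_src_def by code_simp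
lemma ar4': "\<forall>c\<in>set [0..<(30::nat)]. \<forall>r\<in>set [0..<10]. \<forall>j\<in>{1,2,3}. (g_src c = 10*(j-1)+r) = (c = 10*(j-1) + rho r)"
  unfolding g_src_def rho_def by code_simp
lemma ar5': "\<forall>c\<in>set [0..<(30::nat)]. \<forall>r\<in>set [0..<10]. \<forall>j\<in>{1,2,3}. ((c+20) mod 30 = 10*(j-1)+r) = (c = 10*(sg j-1)+r)"
  unfolding sg_def by code_simp
lemma ar6: "mset (map rho [0..<10]) = mset [0..<10]" unfolding rho_def by code_simp
lemma ar7': "\<forall>j\<in>set [0..<(30::nat)]. (((j+20) mod 30 + 20) mod 30 + 20) mod 30 = j" by code_simp
lemma ar8': "\<forall>r\<in>set [0..<(10::nat)]. rho r < 10" unfolding rho_def by code_simp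

lemma ar1: "j < 30 \<Longrightarrow> g_src j < 30" using ar1' by simp
lemma ar2: "j < 30 \<Longrightarrow> g_src (g_src (g_src j)) = j" using ar2' by simp
lemma ar3: "j < 30 \<Longrightarrow> g_src ((j+20) mod 30) = (g_src j + 20) mod 30" using ar3' by simp
lemma ar4: "c < 30 \<Longrightarrow> r < 10 \<Longrightarrow> j\<in>{1,2,3} \<Longrightarrow> (g_src c = 10*(j-1)+r) = (c = 10*(j-1) + rho r)"
  using ar4'[rule_format, of c r j] by simp
lemma ar5: "c < 30 \<Longrightarrow> r < 10 \<Longrightarrow> j\<in>{1,2,3} \<Longrightarrow> ((c+20) mod 30 = 10*(j-1)+r) = (c = 10*(sg j-1)+r)"
  using ar5'[rule_format, of c r j] by simp
lemma ar7: "(j::nat) < 30 \<Longrightarrow> (((j+20) mod 30 + 20) mod 30 + 20) mod 30 = j" using ar7' by simp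
lemma ar8: "r < 10 \<Longrightarrow> rho r < 10" using ar8' by simp

lemma rows_carrier30: "dim_col A = n \<Longrightarrow> set (rows A) \<subseteq> carrier_vec n"
  by (auto simp: rows_def)

lemma rows_f: "dim_col A = 30 \<Longrightarrow> rows (f_op A) = map fv (rows A)"
  by (rule nth_equalityI) (auto simp: f_op_def fv_def intro!: eq_vecI)
lemma rows_g: "dim_col A = 30 \<Longrightarrow> rows (g_op A) = map gv (rows A)"
  by (rule nth_equalityI) (auto simp: g_op_def gv_def ar1 intro!: eq_vecI)
lemma dim_f[simp]: "dim_col (f_op A) = 30" "dim_row (f_op A) = dim_row A" by (auto simp: f_op_def)
lemma dim_g[simp]: "dim_col (g_op A) = 30" "dim_row (g_op A) = dim_row A" by (auto simp: g_op_def)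

lemma fv3: "v \<in> carrier_vec 30 \<Longrightarrow> fv (fv (fv v)) = v"
  by (auto simp: fv_def ar7 intro!: eq_vecI)
lemma gv3: "v \<in> carrier_vec 30 \<Longrightarrow> gv (gv (gv v)) = v"
  by (auto simp: gv_def ar1 ar2 intro!: eq_vecI)
lemma fgcomm: "v \<in> carrier_vec 30 \<Longrightarrow> fv (gv v) = gv (fv v)"
  by (auto simp: gv_def fv_def ar1 ar3 intro!: eq_vecI)

lemma dimW[simp]: "dim_col (Wmat j) = 30" "dim_row (Wmat j) = 10" by (auto simp: Wmat_def)
lemma rowsW: "rows (Wmat j) = map (row (Wmat j)) [0..<10]" by (simp add: rows_def)

lemma fW: assumes "j \<in> {1,2,3}" shows "map fv (rows (Wmat j)) = rows (Wmat (sg j))"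
proof -
  have "fv (row (Wmat j) r) = row (Wmat (sg j)) r" if r: "r < 10" for r
  proof (rule eq_vecI)
    fix c assume "c < dim_vec (row (Wmat (sg j)) r)"
    then have c: "c < 30" by simp
    have "fv (row (Wmat j) r) $ c = Wmat j $$ (r, (c+20) mod 30)" using c r by (simp add: fv_def)
    also have "\<dots> = (if (c+20) mod 30 = 10*(j-1)+r then 1 else 0)" using c r by (simp add: Wmat_def)
    also have "\<dots> = (if c = 10*(sg j-1)+r then 1 else 0)" using ar5[OF c r assms] by simp
    also have "\<dots> = row (Wmat (sg j)) r $ c" using c r by (simp add: Wmat_def)
    finally show "fv (row (Wmat j) r) $ c = row (Wmat (sg j)) r $ c" .
  qed (simp add: fv_def)
  then show ?thesis unfolding rowsW[of j] rowsW[of "sg j"] by simp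
qed

lemma gW: assumes "j \<in> {1,2,3}" shows "mset (map gv (rows (Wmat j))) = mset (rows (Wmat j))"
proof -
  have "gv (row (Wmat j) r) = row (Wmat j) (rho r)" if r: "r < 10" for r
  proof (rule eq_vecI)
    fix c assume "c < dim_vec (row (Wmat j) (rho r))"
    then have c: "c < 30" by simp
    have "gv (row (Wmat j) r) $ c = Wmat j $$ (r, g_src c)" using c r by (simp add: gv_def ar1)
    also have "\<dots> = (if g_src c = 10*(j-1)+r then 1 else 0)" using c r ar1[OF c] by (simp add: Wmat_def)
    also have "\<dots> = (if c = 10*(j-1)+rho r then 1 else 0)" using ar4[OF c r assms] by simp
    also have "\<dots> = row (Wmat j) (rho r) $ c" using c r ar8[OF r] by (simp add: Wmat_def)
    finally show "gv (row (Wmat j) r) $ c = row (Wmat j) (rho r) $ c" .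
  qed (simp add: gv_def ar8 r)
  then have "map gv (rows (Wmat j)) = map (row (Wmat j)) (map rho [0..<10])"
    unfolding rowsW[of j] by simp
  then have "mset (map gv (rows (Wmat j))) = image_mset (row (Wmat j)) (mset (map rho [0..<10]))"
    by (metis mset_map)
  also have "\<dots> = image_mset (row (Wmat j)) (mset [0..<10])" using ar6 by (rule arg_cong)
  also have "\<dots> = mset (rows (Wmat j))" unfolding rowsW[of j] by (metis mset_map)
  finally show ?thesis .
qed



lemma fv_car[simp]: "fv v \<in> carrier_vec 30" by (simp add: fv_def)
lemma gv_car[simp]: "gv v \<in> carrier_vec 30" by (simp add: gv_def)

context
  fixes z :: "bit mat"
  assumes z: "z \<in> carrier_mat 2 30"
begin

lemma zc: "dim_col z = 30" using z by simp

lemma rowsZ1: "rows (Z1 z) = rows z @ map fv (rows z) @ map fv (map fv (rows z))"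
  and dimZ1: "dim_col (Z1 z) = 30"
proof -
  have a: "rows (f_op z @\<^sub>r f_op (f_op z)) = rows (f_op z) @ rows (f_op (f_op z))"
       "dim_col (f_op z @\<^sub>r f_op (f_op z)) = 30"
    using rows_append_rows[of "f_op (f_op z)" "f_op z"] by simp_all
  show "rows (Z1 z) = rows z @ map fv (rows z) @ map fv (map fv (rows z))"
    unfolding Z1_def using rows_append_rows(1)[of "f_op z @\<^sub>r f_op (f_op z)" z] a zc
    by (simp add: rows_f)
  show "dim_col (Z1 z) = 30" unfolding Z1_def using rows_append_rows(2)[of "f_op z @\<^sub>r f_op (f_op z)" z] a zc
    by simp
qed

lemma dimZ: "dim_col (Zmat z i) = 30"
  by (simp add: Zmat_def dimZ1)

lemma rowsZ2: "rows (Zmat z 2) = map gv (rows (Z1 z))"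
  by (simp add: Zmat_def rows_g dimZ1)
lemma rowsZ3: "rows (Zmat z 3) = map gv (map gv (rows (Z1 z)))"
  by (simp add: Zmat_def rows_g dimZ1)
lemma rowsZ1': "rows (Zmat z 1) = rows (Z1 z)"
  by (simp add: Zmat_def)

lemma carZ1: "set (rows (Z1 z)) \<subseteq> carrier_vec 30"
  using rows_carrier30[OF dimZ1] .

lemma fZ1: "mset (map fv (rows (Z1 z))) = mset (rows (Z1 z))"
proof -
  have c: "set (rows z) \<subseteq> carrier_vec 30" using rows_carrier30[OF zc] .
  have "map (\<lambda>v. fv (fv (fv v))) (rows z) = rows z"
    by (rule map_idI) (use c fv3 in auto)
  then have "map fv (map fv (map fv (rows z))) = rows z" by (simp add: comp_def)
  then show ?thesis unfolding rowsZ1 by (simp add: ac_simps)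
qed

lemma fZ: assumes "i \<in> {1,2,3}" shows "mset (map fv (rows (Zmat z i))) = mset (rows (Zmat z i))"
proof -
  have c1: "set (map gv (rows (Z1 z))) \<subseteq> carrier_vec 30" by auto
  have comm1: "map fv (map gv (rows (Z1 z))) = map gv (map fv (rows (Z1 z)))"
    using carZ1 fgcomm by (auto simp: subset_iff)
  have comm2: "map fv (map gv (map gv (rows (Z1 z)))) = map gv (map fv (map gv (rows (Z1 z))))"
    using c1 fgcomm by (auto simp: subset_iff)
  have e2: "mset (map fv (map gv (rows (Z1 z)))) = mset (map gv (rows (Z1 z)))"
    unfolding comm1 using fZ1 by (metis mset_map)
  have e3: "mset (map fv (map gv (map gv (rows (Z1 z))))) = mset (map gv (map gv (rows (Z1 z))))"
    unfolding comm2 using e2 by (metis mset_map)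
  have "i = 1 \<Longrightarrow> ?thesis" by (simp only: rowsZ1' fZ1)
  moreover have "i = 2 \<Longrightarrow> ?thesis" by (simp only: rowsZ2 e2)
  moreover have "i = 3 \<Longrightarrow> ?thesis" by (simp only: rowsZ3 e3)
  ultimately show ?thesis using assms by blast
qed

lemma gZ: assumes "i \<in> {1,2,3}" shows "map gv (rows (Zmat z i)) = rows (Zmat z (sg i))"
proof -
  have "map gv (map gv (map gv (rows (Z1 z)))) = rows (Z1 z)"
    using carZ1 gv3 by (induction "rows (Z1 z)") (auto simp: subset_iff map_idI)
  then have h3: "map gv (rows (Zmat z 3)) = rows (Zmat z 1)" by (simp only: rowsZ3 rowsZ1')
  have s: "sg 1 = 2" "sg 2 = 3" "sg 3 = 1" by (simp_all add: sg_def)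
  have "i = 1 \<Longrightarrow> ?thesis" by (simp only: s rowsZ1' rowsZ2)
  moreover have "i = 2 \<Longrightarrow> ?thesis" by (simp only: s rowsZ2 rowsZ3)
  moreover have "i = 3 \<Longrightarrow> ?thesis" by (simp only: s h3)
  ultimately show ?thesis using assms by blast
qed

lemma rowsM:
  assumes "finite S" "finite T"
  shows "dim_col (Mmat z S T) = 30"
    and "mset (map h (rows (Mmat z S T))) =
           (\<Sum>j\<in>S. mset (map h (rows (Wmat j)))) + (\<Sum>i\<in>T. mset (map h (rows (Zmat z i))))"
proof -
  have all: "\<forall>M\<in>set (map Wmat (sorted_list_of_set S) @ map (Zmat z) (sorted_list_of_set T)). dim_col M = 30"
    using dimZ by auto
  note st = rows_stack[OF all]
  show "dim_col (Mmat z S T) = 30" using st unfolding Mmat_def by simp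
  have "map h (rows (Mmat z S T)) = concat (map (\<lambda>j. map h (rows (Wmat j))) (sorted_list_of_set S))
       @ concat (map (\<lambda>i. map h (rows (Zmat z i))) (sorted_list_of_set T))"
    using st unfolding Mmat_def by (simp add: map_concat comp_def)
  then show "mset (map h (rows (Mmat z S T))) =
           (\<Sum>j\<in>S. mset (map h (rows (Wmat j)))) + (\<Sum>i\<in>T. mset (map h (rows (Zmat z i))))"
    using mset_concat_sorted[OF assms(1), of "\<lambda>j. map h (rows (Wmat j))"]
      mset_concat_sorted[OF assms(2), of "\<lambda>i. map h (rows (Zmat z i))"] by simp
qed

lemma inj_sg: "inj_on sg {1,2,3}" by (auto simp: inj_on_def sg_def)
lemma sg_sub: "S \<subseteq> {1,2,3} \<Longrightarrow> sg ` S \<subseteq> {1,2,3}" by (auto simp: sg_def)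

lemma Fstep:
  assumes S: "S \<subseteq> {1,2,3}" and T: "T \<subseteq> {1,2,3}"
  shows "gf2_rank (Mmat z S T) = gf2_rank (Mmat z (sg ` S) T)"
proof -
  have fS0: "finite S" "finite T" using S T by (auto intro: finite_subset)
  then have fS: "finite S" "finite T" "finite (sg ` S)" by auto
  let ?M = "Mmat z S T"
  have dM: "dim_col ?M = 30" by (rule rowsM(1)[OF fS(1,2)])
  have "gf2_rank (f_op ?M) = gf2_rank ?M"
    unfolding f_op_def
  proof (rule rank_colperm[OF dM])
    fix k :: nat assume k: "k < 30"
    show "\<exists>j<30. (j + 20) mod 30 = k"
      by (rule exI[of _ "(k+10) mod 30"]) (use k in \<open>simp add: mod_add_left_eq\<close>)
  qed simp
  moreover have "gf2_rank (f_op ?M) = gf2_rank (Mmat z (sg ` S) T)"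
  proof (rule rank_mset)
    show "dim_col (f_op ?M) = dim_col (Mmat z (sg ` S) T)" using rowsM(1)[OF fS(3) fS(2)] by simp
    have "mset (rows (f_op ?M)) = (\<Sum>j\<in>S. mset (map fv (rows (Wmat j)))) + (\<Sum>i\<in>T. mset (map fv (rows (Zmat z i))))"
      using rowsM(2)[OF fS(1,2), of fv] rows_f[OF dM] by simp
    also have "\<dots> = (\<Sum>j\<in>S. mset (rows (Wmat (sg j)))) + (\<Sum>i\<in>T. mset (rows (Zmat z i)))"
    proof (rule arg_cong2[where f="(+)"])
      show "(\<Sum>j\<in>S. mset (map fv (rows (Wmat j)))) = (\<Sum>j\<in>S. mset (rows (Wmat (sg j))))"
        by (rule sum.cong[OF refl]) (metis fW S subsetD)
      show "(\<Sum>i\<in>T. mset (map fv (rows (Zmat z i)))) = (\<Sum>i\<in>T. mset (rows (Zmat z i)))"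
        by (rule sum.cong[OF refl]) (metis fZ T subsetD)
    qed
    also have "(\<Sum>j\<in>S. mset (rows (Wmat (sg j)))) = (\<Sum>j\<in>sg ` S. mset (rows (Wmat j)))"
      using sum.reindex[OF inj_on_subset[OF inj_sg S], of "\<lambda>j. mset (rows (Wmat j))"] by simp
    also have "(\<Sum>j\<in>sg ` S. mset (rows (Wmat j))) + (\<Sum>i\<in>T. mset (rows (Zmat z i))) = mset (rows (Mmat z (sg ` S) T))"
      using rowsM(2)[OF fS(3) fS(2), of id] by simp
    finally show "mset (rows (f_op ?M)) = mset (rows (Mmat z (sg ` S) T))" .
  qed
  ultimately show ?thesis by simp
qed

lemma Gstep:
  assumes S: "S \<subseteq> {1,2,3}" and T: "T \<subseteq> {1,2,3}"
  shows "gf2_rank (Mmat z S T) = gf2_rank (Mmat z S (sg ` T))"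
proof -
  have fS0: "finite S" "finite T" using S T by (auto intro: finite_subset)
  then have fS: "finite S" "finite T" "finite (sg ` T)" by auto
  let ?M = "Mmat z S T"
  have dM: "dim_col ?M = 30" by (rule rowsM(1)[OF fS(1,2)])
  have "gf2_rank (g_op ?M) = gf2_rank ?M"
    unfolding g_op_def
  proof (rule rank_colperm[OF dM])
    fix k :: nat assume k: "k < 30"
    show "\<exists>j<30. g_src j = k"
      by (rule exI[of _ "g_src (g_src k)"]) (use k ar1 ar2 in auto)
  qed (rule ar1)
  moreover have "gf2_rank (g_op ?M) = gf2_rank (Mmat z S (sg ` T))"
  proof (rule rank_mset)
    show "dim_col (g_op ?M) = dim_col (Mmat z S (sg ` T))" using rowsM(1)[OF fS(1) fS(3)] by simp
    have "mset (rows (g_op ?M)) = (\<Sum>j\<in>S. mset (map gv (rows (Wmat j)))) + (\<Sum>i\<in>T. mset (map gv (rows (Zmat z i))))"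
      using rowsM(2)[OF fS(1,2), of gv] rows_g[OF dM] by simp
    also have "\<dots> = (\<Sum>j\<in>S. mset (rows (Wmat j))) + (\<Sum>i\<in>T. mset (rows (Zmat z (sg i))))"
    proof (rule arg_cong2[where f="(+)"])
      show "(\<Sum>j\<in>S. mset (map gv (rows (Wmat j)))) = (\<Sum>j\<in>S. mset (rows (Wmat j)))"
        by (rule sum.cong[OF refl]) (metis gW S subsetD)
      show "(\<Sum>i\<in>T. mset (map gv (rows (Zmat z i)))) = (\<Sum>i\<in>T. mset (rows (Zmat z (sg i))))"
        by (rule sum.cong[OF refl]) (metis gZ T subsetD)
    qed
    also have "(\<Sum>i\<in>T. mset (rows (Zmat z (sg i)))) = (\<Sum>i\<in>sg ` T. mset (rows (Zmat z i)))"
      using sum.reindex[OF inj_on_subset[OF inj_sg T], of "\<lambda>i. mset (rows (Zmat z i))"] by simp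
    also have "(\<Sum>j\<in>S. mset (rows (Wmat j))) + (\<Sum>i\<in>sg ` T. mset (rows (Zmat z i))) = mset (rows (Mmat z S (sg ` T)))"
      using rowsM(2)[OF fS(1) fS(3), of id] by simp
    finally show "mset (rows (g_op ?M)) = mset (rows (Mmat z S (sg ` T)))" .
  qed
  ultimately show ?thesis by simp
qed

end

lemma subs3_aux: "(if a then {1} else {}) \<union> (if b then {2} else {}) \<union> (if c then {3::nat} else {})
   \<in> {{},{1},{2},{3},{1,2},{1,3},{2,3},{1,2,3}}"
  by (cases a; cases b; cases c) (simp_all add: insert_commute)

lemma subs3: assumes "S \<subseteq> {1,2,3::nat}" shows "S \<in> {{},{1},{2},{3},{1,2},{1,3},{2,3},{1,2,3}}"
proof -
  have "S = (if 1 \<in> S then {1} else {}) \<union> (if 2 \<in> S then {2} else {}) \<union> (if 3 \<in> S then {3::nat} else {})"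
    using assms by auto
  then show ?thesis using subs3_aux by metis
qed

lemma orbit3_all: "\<forall>S\<in>set [{},{1},{2},{3},{1,2},{1,3},{2,3},{1,2,3::nat}].
   \<forall>S'\<in>set [{},{1},{2},{3},{1,2},{1,3},{2,3},{1,2,3::nat}].
   card S = card S' \<longrightarrow> (S' = S \<or> S' = sg ` S \<or> S' = sg ` sg ` S)"
  unfolding sg_def by code_simp

lemma orbit3:
  assumes "S \<subseteq> {1,2,3::nat}" "S' \<subseteq> {1,2,3}" "card S = card S'"
  shows "S' = S \<or> S' = sg ` S \<or> S' = sg ` sg ` S"
proof -
  have a: "S \<in> set [{},{1},{2},{3},{1,2},{1,3},{2,3},{1,2,3::nat}]"
    using subs3[OF assms(1)] by (simp only: set_simps)
  have b: "S' \<in> set [{},{1},{2},{3},{1,2},{1,3},{2,3},{1,2,3::nat}]"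
    using subs3[OF assms(2)] by (simp only: set_simps)
  show ?thesis using orbit3_all a b assms(3) by blast
qed


theorem proposition1:
  fixes z :: "bit mat" and S S' T T' :: "nat set"
  assumes "z \<in> carrier_mat 2 30"
    and "S \<subseteq> {1,2,3}" and "S' \<subseteq> {1,2,3}" and "T \<subseteq> {1,2,3}" and "T' \<subseteq> {1,2,3}"
    and "card S = card S'" and "card T = card T'"
  shows "gf2_rank (Mmat z S T) = gf2_rank (Mmat z S' T')"
proof -
  note z = assms(1)
  have 1: "gf2_rank (Mmat z S T) = gf2_rank (Mmat z S' T)"
  proof -
    have a: "gf2_rank (Mmat z S T) = gf2_rank (Mmat z (sg ` S) T)"
      by (rule Fstep[OF z assms(2) assms(4)])
    have b: "gf2_rank (Mmat z (sg ` S) T) = gf2_rank (Mmat z (sg ` sg ` S) T)"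
      by (rule Fstep[OF z sg_sub[OF z assms(2)] assms(4)])
    show ?thesis using orbit3[OF assms(2) assms(3) assms(6)] a b by auto
  qed
  have 2: "gf2_rank (Mmat z S' T) = gf2_rank (Mmat z S' T')"
  proof -
    have a: "gf2_rank (Mmat z S' T) = gf2_rank (Mmat z S' (sg ` T))"
      by (rule Gstep[OF z assms(3) assms(4)])
    have b: "gf2_rank (Mmat z S' (sg ` T)) = gf2_rank (Mmat z S' (sg ` sg ` T))"
      by (rule Gstep[OF z assms(3) sg_sub[OF z assms(4)]])
    show ?thesis using orbit3[OF assms(4) assms(5) assms(7)] a b by auto
  qed
  show ?thesis using 1 2 by simp
qed

end
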